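(* Let $\Omega>0$ be fixed and for each $\lambda>1/\pi$ let $w^\lambda$ be a maximizer of $\mathcal{E}$ over $K_\lambda(D)$, with associated number $\mu^\lambda=\operatorname{ess\,sup}_{\{w^\lambda<\lambda\}}(Gw^\lambda+\frac{\Omega}{2}|x|^2)$. Let $\psi^\lambda=Gw^\lambda+\frac{\Omega}{2}|x|^2-\mu^\lambda$, $\psi^\lambda_+=\max\{\psi^\lambda,0\}$ and $T(w^\lambda)=\frac12\int_D|\nabla\psi^\lambda_+|^2dx$. Then there is a constant $C$ independent of $\lambda$ such that $T(w^\lambda)\le C$ for all sufficiently large $\lambda$.
   Context: $D$ is the open unit disk in $\mathbb{R}^2$; $G$ is the Green's function of $-\Delta$ in $D$ with zero Dirichlet boundary condition and $Gw(x)=\int_D G(x,y)w(y)dy$. $K_\lambda(D)=\{w\in L^\infty(D):0\le w\le\lambda\text{ a.e.},\ \int_D w=1\}$, $\mathcal{E}(w)=\frac12\int_D\int_D G(x,y)w(x)w(y)dxdy+\frac{\Omega}{2}\int_D|x|^2w(x)dx$; a maximizer is $w^\lambda\in K_\lambda(D)$ with $\mathcal{E}(w^\lambda)=\sup_{K_\lambda(D)}\mathcal{E}$. *)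

theory Defs
  imports "HOL-Analysis.Analysis" "HOL-Probability.Probability"
begin

text \<open>The plane R^2 is identified with the complex numbers; D is the open unit disk.\<close>
definition unit_disk :: "complex set" where
  "unit_disk = ball 0 1"

text \<open>Green's function of -Laplace on the unit disk with zero Dirichlet data:
  G(x,y) = (1/(2 pi)) ln (|1 - x conj y| / |x - y|).\<close>
definition green_disk :: "complex \<Rightarrow> complex \<Rightarrow> real" where
  "green_disk x y = ln (cmod (1 - x * cnj y) / cmod (x - y)) / (2 * pi)"

definition green_op :: "(complex \<Rightarrow> real) \<Rightarrow> complex \<Rightarrow> real" where
  "green_op w x = (LINT y:unit_disk|lebesgue. green_disk x y * w y)"

definition K_set :: "real \<Rightarrow> (complex \<Rightarrow> real) set" where
  "K_set lam = {w. w \<in> borel_measurable lebesgue \<and>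
      (AE x in lebesgue. x \<in> unit_disk \<longrightarrow> 0 \<le> w x \<and> w x \<le> lam) \<and>
      (LINT x:unit_disk|lebesgue. w x) = 1}"

definition energy :: "real \<Rightarrow> (complex \<Rightarrow> real) \<Rightarrow> real" where
  "energy Om w = 1/2 * (LINT x:unit_disk|lebesgue. w x * green_op w x)
      + Om/2 * (LINT x:unit_disk|lebesgue. (cmod x)^2 * w x)"

definition is_maximizer :: "real \<Rightarrow> real \<Rightarrow> (complex \<Rightarrow> real) \<Rightarrow> bool" where
  "is_maximizer Om lam w \<longleftrightarrow> w \<in> K_set lam \<and> (\<forall>v\<in>K_set lam. energy Om v \<le> energy Om w)"

definition mu_val :: "real \<Rightarrow> real \<Rightarrow> (complex \<Rightarrow> real) \<Rightarrow> real" where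
  "mu_val Om lam w = real_of_ereal
     (esssup (restrict_space lebesgue {x\<in>unit_disk. w x < lam})
        (\<lambda>x. ereal (green_op w x + Om/2 * (cmod x)^2)))"

definition psi :: "real \<Rightarrow> real \<Rightarrow> (complex \<Rightarrow> real) \<Rightarrow> complex \<Rightarrow> real" where
  "psi Om lam w x = green_op w x + Om/2 * (cmod x)^2 - mu_val Om lam w"

text \<open>|grad f(x)|^2 for f : R^2 -> R (at points of differentiability; the
  Lipschitz function psi_+ is differentiable a.e., elsewhere we put 0).\<close>
definition grad_sq :: "(complex \<Rightarrow> real) \<Rightarrow> complex \<Rightarrow> real" where
  "grad_sq f x = (if f differentiable (at x)
     then (frechet_derivative f (at x) 1)^2 + (frechet_derivative f (at x) \<i>)^2 else 0)"

definition kinetic :: "real \<Rightarrow> real \<Rightarrow> (complex \<Rightarrow> real) \<Rightarrow> real" where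
  "kinetic Om lam w = 1/2 * (LINT x:unit_disk|lebesgue.
      grad_sq (\<lambda>y. max (psi Om lam w y) 0) x)"

end

theory Submission
  imports Defs
begin
lemma emeasure_cball_c: fixes c :: complex assumes "r \<ge> 0"
  shows "emeasure lebesgue (cball c r) = ennreal (pi * r^2)"
proof -
  have "emeasure lebesgue (cball c r) = emeasure lborel (cball c r)"
    by (simp add: emeasure_completion)
  also have "\<dots> = ennreal (unit_ball_vol (DIM(complex)) * r ^ DIM(complex))"
    using emeasure_cball[OF assms] by blast
  also have "unit_ball_vol (DIM(complex)) = pi"
    using unit_ball_vol_numeral(1)[of Num.One] by simp
  finally show ?thesis by simp
qed

lemma pow2_bracket: fixes t :: real assumes "t \<ge> 1"
  shows "\<exists>K::nat. 2^K \<le> t \<and> t < 2^(K+1)"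
proof -
  obtain n :: nat where n: "t < 2^n" using real_arch_pow[of 2 t] by auto
  define m where "m = (LEAST m::nat. t < 2^m)"
  have m: "t < 2^m" unfolding m_def by (rule LeastI[of _ n], rule n)
  have "m \<noteq> 0"
  proof
    assume "m = 0" with m assms show False by simp
  qed
  then obtain K where K: "m = Suc K" by (cases m) auto
  have "\<not> t < 2^K" using K unfolding m_def
    by (metis Least_le Suc_n_not_le_n)
  then show ?thesis using m K by (intro exI[of _ K]) auto
qed

lemma sing_pointwise: fixes x y :: complex assumes r: "r > 0"
  shows "indicator (cball x r) y * ennreal (1 / cmod (x - y))
     \<le> (\<Sum>k. indicator (cball x (r / 2^k)) y * ennreal (2^(k+1) / r))"
proof (cases "y \<in> cball x r \<and> y \<noteq> x")
  case False
  then show ?thesis by (auto simp: indicator_def)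
next
  case True
  define d where "d = cmod (x - y)"
  have d: "0 < d" "d \<le> r" using True by (auto simp: d_def dist_norm)
  have "r / d \<ge> 1" using d by simp
  then obtain K :: nat where K: "2^K \<le> r / d" "r / d < 2^(K+1)" using pow2_bracket by blast
  have "d \<le> r / 2^K" using K(1) d by (simp add: field_simps)
  hence inK: "y \<in> cball x (r / 2^K)" by (simp add: dist_norm d_def)
  have "1 / d \<le> 2^(K+1) / r" using K(2) d r by (simp add: field_simps)
  hence "indicator (cball x r) y * ennreal (1 / cmod (x - y)) \<le> indicator (cball x (r / 2^K)) y * ennreal (2^(K+1) / r)"
    using True inK by (simp add: d_def ennreal_leI)
  also have "\<dots> \<le> (\<Sum>k. indicator (cball x (r / 2^k)) y * ennreal (2^(k+1) / r))"
    using sum_le_suminf[OF summableI, of "{K}"] by simp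
  finally show ?thesis .
qed

lemma sing_integral: fixes x :: complex assumes r: "r > 0"
  shows "(\<integral>\<^sup>+ y. indicator (cball x r) y * ennreal (1 / cmod (x - y)) \<partial>lebesgue) \<le> ennreal (4 * pi * r)"
proof -
  have [measurable]: "\<And>s. cball x s \<in> sets lebesgue" by (simp add: fmeasurableD lmeasurable_cball)
  have "(\<integral>\<^sup>+ y. indicator (cball x r) y * ennreal (1 / cmod (x - y)) \<partial>lebesgue)
     \<le> (\<integral>\<^sup>+ y. (\<Sum>k. indicator (cball x (r / 2^k)) y * ennreal (2^(k+1) / r)) \<partial>lebesgue)"
    by (intro nn_integral_mono sing_pointwise r)
  also have "\<dots> = (\<Sum>k. (\<integral>\<^sup>+ y. indicator (cball x (r / 2^k)) y * ennreal (2^(k+1) / r) \<partial>lebesgue))"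
    by (intro nn_integral_suminf) measurable
  also have "\<dots> = (\<Sum>k. ennreal (2 * pi * r * (1/2)^k))"
  proof (intro suminf_cong)
    fix k :: nat
    have "(\<integral>\<^sup>+ y. indicator (cball x (r / 2^k)) y * ennreal (2^(k+1) / r) \<partial>lebesgue)
       = ennreal (2^(k+1) / r) * emeasure lebesgue (cball x (r / 2^k))"
      by (subst nn_integral_multc) (auto simp: mult.commute)
    also have "\<dots> = ennreal (2^(k+1) / r) * ennreal (pi * (r / 2^k)^2)"
      by (subst emeasure_cball_c) (use r in auto)
    also have "\<dots> = ennreal (2 * pi * r * (1/2)^k)"
      using r by (simp add: ennreal_mult'[symmetric] power_divide power_mult_distrib field_simps power2_eq_square
          flip: power_mult power_add)
    finally show "(\<integral>\<^sup>+ y. indicator (cball x (r / 2^k)) y * ennreal (2^(k+1) / r) \<partial>lebesgue) = ennreal (2 * pi * r * (1/2)^k)" .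
  qed
  also have "\<dots> = ennreal (4 * pi * r)"
  proof -
    have "(\<lambda>k. 2 * pi * r * (1/2::real)^k) sums (2 * pi * r * (1 / (1 - 1/2)))"
      by (intro sums_mult geometric_sums) auto
    hence "(\<lambda>k. ennreal (2 * pi * r * (1/2::real)^k)) sums ennreal (4 * pi * r)"
      using r by (subst sums_ennreal) (auto simp: mult.assoc)
    thus ?thesis by (rule sums_unique[symmetric])
  qed
  finally show ?thesis .
qed

lemma disk_sets[measurable]: "unit_disk \<in> sets lebesgue"
  unfolding unit_disk_def by (simp add: fmeasurableD lmeasurable_ball)

lemma id_leb_meas[measurable]: "(\<lambda>y::complex. y) \<in> borel_measurable lebesgue"
  by (rule measurable_completion) simp

lemma bathtub_nn:
  fixes w :: "complex \<Rightarrow> real" and x :: complex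
  assumes wm[measurable]: "w \<in> borel_measurable lebesgue"
    and wb: "AE y in lebesgue. y \<in> unit_disk \<longrightarrow> 0 \<le> w y \<and> w y \<le> lam"
    and wi: "set_integrable lebesgue unit_disk w"
    and w1: "(LINT y:unit_disk|lebesgue. w y) = 1"
    and lam: "lam \<ge> 1"
  shows "(\<integral>\<^sup>+ y. indicator unit_disk y * ennreal (w y / cmod (x - y)) \<partial>lebesgue) \<le> ennreal ((1 + 4*pi) * sqrt lam)"
proof -
  define r where "r = 1 / sqrt lam"
  have r: "r > 0" using lam by (simp add: r_def)
  have [measurable]: "\<And>s. cball x s \<in> sets lebesgue" by (simp add: fmeasurableD lmeasurable_cball)
  have pw: "AE y in lebesgue. indicator unit_disk y * ennreal (w y / cmod (x - y))
      \<le> ennreal lam * (indicator (cball x r) y * ennreal (1 / cmod (x - y)))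
        + ennreal (sqrt lam) * (indicator unit_disk y * ennreal (w y))"
    using wb
  proof eventually_elim
    case (elim y)
    show ?case
    proof (cases "y \<in> unit_disk")
      case False then show ?thesis by simp
    next
      case True
      with elim have w: "0 \<le> w y" "w y \<le> lam" by auto
      define d where "d = cmod (x - y)"
      show ?thesis
      proof (cases "d \<le> r")
        case True
        have "w y / d \<le> lam * (1 / d)"
          using w by (simp add: divide_right_mono d_def)
        hence "ennreal (w y / d) \<le> ennreal lam * ennreal (1 / d)"
          using lam by (simp add: ennreal_mult'[symmetric] ennreal_leI)
        moreover have "y \<in> cball x r" using True by (simp add: d_def dist_norm)
        ultimately show ?thesis using \<open>y \<in> unit_disk\<close>
          by (simp add: d_def) (meson add_increasing2 order.trans zero_le)
      next
        case False
        hence d: "d > r" by simp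
        have dp: "d > 0" using d r by simp
        have "1 < d * sqrt lam" using d lam unfolding r_def by (simp add: field_simps)
        hence "1 / d \<le> sqrt lam" using dp
          by (simp add: divide_le_eq mult.commute)
        hence "w y / d \<le> sqrt lam * w y" using w d r
          by (metis divide_inverse inverse_eq_divide mult.commute mult_left_mono)
        hence "ennreal (w y / d) \<le> ennreal (sqrt lam) * ennreal (w y)"
          using w by (simp add: ennreal_mult'[symmetric] ennreal_leI)
        thus ?thesis using \<open>y \<in> unit_disk\<close>
          by (simp add: d_def) (meson add_increasing order.trans zero_le)
      qed
    qed
  qed
  have "(\<integral>\<^sup>+ y. indicator unit_disk y * ennreal (w y / cmod (x - y)) \<partial>lebesgue)
     \<le> (\<integral>\<^sup>+ y. ennreal lam * (indicator (cball x r) y * ennreal (1 / cmod (x - y)))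
        + ennreal (sqrt lam) * (indicator unit_disk y * ennreal (w y)) \<partial>lebesgue)"
    by (rule nn_integral_mono_AE[OF pw])
  also have "\<dots> = ennreal lam * (\<integral>\<^sup>+ y. indicator (cball x r) y * ennreal (1 / cmod (x - y)) \<partial>lebesgue)
     + ennreal (sqrt lam) * (\<integral>\<^sup>+ y. indicator unit_disk y * ennreal (w y) \<partial>lebesgue)"
    by (subst nn_integral_add; (subst nn_integral_cmult)?; (subst nn_integral_cmult)?; measurable?)
  also have "(\<integral>\<^sup>+ y. indicator unit_disk y * ennreal (w y) \<partial>lebesgue) = 1"
  proof -
    have "(\<integral>\<^sup>+ y. indicator unit_disk y * ennreal (w y) \<partial>lebesgue)
        = (\<integral>\<^sup>+ y. ennreal (indicator unit_disk y * w y) \<partial>lebesgue)"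
      by (intro nn_integral_cong) (simp add: indicator_def)
    also have "\<dots> = ennreal (\<integral>y. indicator unit_disk y * w y \<partial>lebesgue)"
      using wi wb by (intro nn_integral_eq_integral)
        (auto simp: set_integrable_def indicator_def elim!: eventually_mono)
    also have "(\<integral>y. indicator unit_disk y * w y \<partial>lebesgue) = 1"
      using w1 by (simp add: set_lebesgue_integral_def)
    finally show ?thesis by simp
  qed
  also have "ennreal lam * (\<integral>\<^sup>+ y. indicator (cball x r) y * ennreal (1 / cmod (x - y)) \<partial>lebesgue)
      \<le> ennreal lam * ennreal (4 * pi * r)"
    by (intro mult_left_mono sing_integral r) auto
  also have "ennreal lam * ennreal (4 * pi * r) + ennreal (sqrt lam) * 1 = ennreal ((1 + 4*pi) * sqrt lam)"
  proof -
    have "lam * (4 * pi * r) + sqrt lam = (1 + 4*pi) * sqrt lam"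
      using lam unfolding r_def by (simp add: field_simps real_sqrt_divide)
    thus ?thesis using lam r by (simp add: ennreal_mult'[symmetric] ennreal_plus[symmetric] del: ennreal_plus)
  qed
  finally show ?thesis by (simp add: add_right_mono)
qed


lemma disk_gap:
  fixes x y :: complex assumes "cmod x \<le> 1" "cmod y \<le> 1"
  shows "cmod (x - y) \<le> cmod (1 - x * cnj y)"
proof -
  obtain a b where x: "x = Complex a b" by (cases x)
  obtain c d where y: "y = Complex c d" by (cases y)
  have "(cmod x)^2 \<le> 1" using assms(1) by (simp add: power_le_one)
  hence ab: "a^2 + b^2 \<le> 1" using x by (simp add: cmod_power2)
  have "(cmod y)^2 \<le> 1" using assms(2) by (simp add: power_le_one)
  hence cd: "c^2 + d^2 \<le> 1" using y by (simp add: cmod_power2)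
  have "(cmod (1 - x * cnj y))^2 - (cmod (x - y))^2 = (1 - (a^2+b^2)) * (1 - (c^2+d^2))"
    unfolding x y cmod_power2 by (simp add: power2_eq_square algebra_simps)
  also have "\<dots> \<ge> 0" using ab cd by (intro mult_nonneg_nonneg) auto
  finally have "(cmod (x - y))^2 \<le> (cmod (1 - x * cnj y))^2" by simp
  thus ?thesis by (simp add: power2_le_iff_abs_le)
qed

lemma ln_diff_bound:
  fixes p q :: real assumes "p > 0" "q > 0"
  shows "\<bar>ln p - ln q\<bar> \<le> \<bar>p - q\<bar> * (1/p + 1/q)"
proof (cases "p \<ge> q")
  case True
  have "ln p - ln q = ln (p/q)" using assms by (simp add: ln_div)
  also have "\<dots> \<le> p/q - 1" using assms by (intro ln_le_minus_one) auto
  also have "\<dots> = (p - q) * (1/q)" using assms by (simp add: field_simps)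
  also have "\<dots> \<le> \<bar>p - q\<bar> * (1/p + 1/q)" using assms True by (intro mult_mono) auto
  finally show ?thesis using True assms by simp
next
  case False
  have "ln q - ln p = ln (q/p)" using assms by (simp add: ln_div)
  also have "\<dots> \<le> q/p - 1" using assms by (intro ln_le_minus_one) auto
  also have "\<dots> = (q - p) * (1/p)" using assms by (simp add: field_simps)
  also have "\<dots> \<le> \<bar>p - q\<bar> * (1/p + 1/q)" using assms False by (intro mult_mono) auto
  finally show ?thesis using False assms by simp
qed

lemma green_bound:
  fixes x y :: complex assumes "x \<in> unit_disk" "y \<in> unit_disk" "y \<noteq> x"
  shows "0 \<le> green_disk x y" "green_disk x y \<le> 1 / (pi * cmod (x - y))"
proof -
  have nx: "cmod x < 1" and ny: "cmod y < 1" using assms by (auto simp: unit_disk_def)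
  define a where "a = cmod (1 - x * cnj y)"
  define b where "b = cmod (x - y)"
  have b: "b > 0" using assms by (simp add: b_def)
  have ab: "b \<le> a" unfolding a_def b_def using nx ny by (intro disk_gap) auto
  have a2: "a \<le> 2"
  proof -
    have "a \<le> cmod 1 + cmod (x * cnj y)" unfolding a_def by (rule norm_triangle_ineq4)
    also have "cmod (x * cnj y) \<le> 1" using nx ny by (simp add: norm_mult mult_le_one)
    finally show ?thesis by simp
  qed
  have "ln (a/b) \<ge> 0" using ab b by simp
  thus "0 \<le> green_disk x y" unfolding green_disk_def a_def b_def by simp
  have "ln (a/b) \<le> a/b - 1" using ab b by (intro ln_le_minus_one) auto
  also have "\<dots> \<le> a / b" by simp
  also have "\<dots> \<le> 2 / b" using a2 b by (simp add: divide_right_mono)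
  finally have "ln (a/b) / (2*pi) \<le> (2/b) / (2*pi)" by (rule divide_right_mono) auto
  also have "(2/b) / (2*pi) = 1 / (pi * b)" by simp
  finally show "green_disk x y \<le> 1 / (pi * cmod (x - y))" unfolding green_disk_def a_def b_def by simp
qed

lemma green_lip:
  fixes x z y :: complex assumes "x \<in> unit_disk" "z \<in> unit_disk" "y \<in> unit_disk" "y \<noteq> x" "y \<noteq> z"
  shows "\<bar>green_disk x y - green_disk z y\<bar> \<le> cmod (x - z) / pi * (1 / cmod (x - y) + 1 / cmod (z - y))"
proof -
  have nx: "cmod x < 1" and nz: "cmod z < 1" and ny: "cmod y < 1" using assms by (auto simp: unit_disk_def)
  define ax where "ax = cmod (1 - x * cnj y)"
  define az where "az = cmod (1 - z * cnj y)"
  define bx where "bx = cmod (x - y)"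
  define bz where "bz = cmod (z - y)"
  have bx: "bx > 0" and bz: "bz > 0" using assms by (auto simp: bx_def bz_def)
  have abx: "bx \<le> ax" unfolding ax_def bx_def using nx ny by (intro disk_gap) auto
  have abz: "bz \<le> az" unfolding az_def bz_def using nz ny by (intro disk_gap) auto
  have ax: "ax > 0" and az: "az > 0" using abx abz bx bz by auto
  have "green_disk x y - green_disk z y = ((ln ax - ln az) - (ln bx - ln bz)) / (2*pi)"
    unfolding green_disk_def ax_def[symmetric] az_def[symmetric] bx_def[symmetric] bz_def[symmetric]
    using ax az bx bz by (simp add: ln_div diff_divide_distrib)
  moreover have "\<bar>ln ax - ln az\<bar> \<le> cmod (x - z) * (1/bx + 1/bz)"
  proof -
    have "\<bar>ax - az\<bar> \<le> cmod ((1 - x * cnj y) - (1 - z * cnj y))"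
      unfolding ax_def az_def by (rule norm_triangle_ineq3)
    also have "(1 - x * cnj y) - (1 - z * cnj y) = (z - x) * cnj y" by (simp add: algebra_simps)
    also have "cmod \<dots> \<le> cmod (x - z)" using ny by (simp add: norm_mult norm_minus_commute mult_left_le)
    finally have d: "\<bar>ax - az\<bar> \<le> cmod (x - z)" .
    have "1/ax + 1/az \<le> 1/bx + 1/bz" using abx abz bx bz
      by (intro add_mono divide_left_mono) auto
    have "\<bar>ln ax - ln az\<bar> \<le> \<bar>ax - az\<bar> * (1/ax + 1/az)" by (rule ln_diff_bound[OF ax az])
    also have "\<dots> \<le> cmod (x - z) * (1/bx + 1/bz)"
      using d \<open>1/ax + 1/az \<le> 1/bx + 1/bz\<close> ax az by (intro mult_mono) auto
    finally show ?thesis .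
  qed
  moreover have "\<bar>ln bx - ln bz\<bar> \<le> cmod (x - z) * (1/bx + 1/bz)"
  proof -
    have "\<bar>bx - bz\<bar> \<le> cmod ((x - y) - (z - y))"
      unfolding bx_def bz_def by (rule norm_triangle_ineq3)
    hence d: "\<bar>bx - bz\<bar> \<le> cmod (x - z)" by simp
    have "\<bar>ln bx - ln bz\<bar> \<le> \<bar>bx - bz\<bar> * (1/bx + 1/bz)" by (rule ln_diff_bound[OF bx bz])
    also have "\<dots> \<le> cmod (x - z) * (1/bx + 1/bz)"
      using d bx bz by (intro mult_right_mono) auto
    finally show ?thesis .
  qed
  moreover have "\<bar>(ln ax - ln az) - (ln bx - ln bz)\<bar> \<le> \<bar>ln ax - ln az\<bar> + \<bar>ln bx - ln bz\<bar>"
    by (rule abs_triangle_ineq4)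
  ultimately have e: "green_disk x y - green_disk z y = ((ln ax - ln az) - (ln bx - ln bz)) / (2*pi)"
     and t: "\<bar>(ln ax - ln az) - (ln bx - ln bz)\<bar> \<le> 2 * (cmod (x - z) * (1/bx + 1/bz))" by linarith+
  have "\<bar>green_disk x y - green_disk z y\<bar> = \<bar>(ln ax - ln az) - (ln bx - ln bz)\<bar> / (2*pi)"
    unfolding e by (simp add: abs_divide)
  also have "\<dots> \<le> (2 * (cmod (x - z) * (1/bx + 1/bz))) / (2*pi)"
    by (rule divide_right_mono[OF t]) auto
  finally have "\<bar>green_disk x y - green_disk z y\<bar> \<le> (2 * (cmod (x - z) * (1/bx + 1/bz))) / (2*pi)" .
  thus ?thesis by (simp add: bx_def bz_def)
qed


lemma cnj_leb_meas[measurable]: "(\<lambda>y::complex. cnj y) \<in> borel_measurable lebesgue"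
  by (rule measurable_completion) (simp add: borel_measurable_continuous_onI)

lemma green_meas[measurable]: "(\<lambda>y. green_disk x y) \<in> borel_measurable lebesgue"
  unfolding green_disk_def by measurable

lemma AE_neq_leb: "AE y in lebesgue. y \<noteq> (c::complex)"
  by (rule AE_completion) (rule AE_lborel_singleton)

locale wsetup =
  fixes w :: "complex \<Rightarrow> real" and lam :: real
  assumes wm[measurable]: "w \<in> borel_measurable lebesgue"
    and wb: "AE y in lebesgue. y \<in> unit_disk \<longrightarrow> 0 \<le> w y \<and> w y \<le> lam"
    and wi: "set_integrable lebesgue unit_disk w"
    and w1: "(LINT y:unit_disk|lebesgue. w y) = 1"
    and lam: "lam \<ge> 1"
begin

definition "B = (1 + 4*pi) * sqrt lam"

lemma B_nonneg: "B \<ge> 0" using lam unfolding B_def by (simp add: pi_gt_zero less_imp_le)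

lemma bath_int:
  shows "set_integrable lebesgue unit_disk (\<lambda>y. w y / cmod (x - y))"
    and "(LINT y:unit_disk|lebesgue. w y / cmod (x - y)) \<le> B"
proof -
  have nn: "(\<integral>\<^sup>+ y. ennreal (indicator unit_disk y * (w y / cmod (x - y))) \<partial>lebesgue)
      = (\<integral>\<^sup>+ y. indicator unit_disk y * ennreal (w y / cmod (x - y)) \<partial>lebesgue)"
    by (intro nn_integral_cong) (simp add: indicator_def)
  have le: "(\<integral>\<^sup>+ y. ennreal (indicator unit_disk y * (w y / cmod (x - y))) \<partial>lebesgue) \<le> ennreal B"
    unfolding nn B_def by (rule bathtub_nn[OF wm wb wi w1 lam])
  have pos: "AE y in lebesgue. 0 \<le> indicator unit_disk y * (w y / cmod (x - y))"
    using wb by eventually_elim (simp add: indicator_def)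
  have int: "integrable lebesgue (\<lambda>y. indicator unit_disk y * (w y / cmod (x - y)))"
    using le pos by (intro integrableI_nonneg) (auto simp: top.not_eq_extremum intro: le_less_trans)
  thus "set_integrable lebesgue unit_disk (\<lambda>y. w y / cmod (x - y))"
    by (simp add: set_integrable_def)
  have "ennreal (\<integral>y. indicator unit_disk y * (w y / cmod (x - y)) \<partial>lebesgue) \<le> ennreal B"
    using le by (subst nn_integral_eq_integral[OF int pos, symmetric])
  thus "(LINT y:unit_disk|lebesgue. w y / cmod (x - y)) \<le> B"
    using B_nonneg by (simp add: set_lebesgue_integral_def ennreal_le_iff)
qed

lemma green_int:
  assumes x: "x \<in> unit_disk"
  shows "set_integrable lebesgue unit_disk (\<lambda>y. green_disk x y * w y)"
proof -
  have i0: "set_integrable lebesgue unit_disk (\<lambda>y. (1/pi) * (w y / cmod (x - y)))"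
    by (intro set_integrable_mult_right bath_int(1))
  have i: "integrable lebesgue (\<lambda>y. indicator unit_disk y *\<^sub>R ((1/pi) * (w y / cmod (x - y))))"
    using i0 unfolding set_integrable_def .
  show ?thesis unfolding set_integrable_def
  proof (rule Bochner_Integration.integrable_bound[OF i])
    show "(\<lambda>y. indicator unit_disk y *\<^sub>R (green_disk x y * w y)) \<in> borel_measurable lebesgue"
      by measurable
    show "AE y in lebesgue. norm (indicator unit_disk y *\<^sub>R (green_disk x y * w y))
        \<le> norm (indicator unit_disk y *\<^sub>R ((1/pi) * (w y / cmod (x - y))))"
      using wb AE_neq_leb[of x]
    proof eventually_elim
      case (elim y)
      show ?case
      proof (cases "y \<in> unit_disk")
        case True
        with elim have w: "0 \<le> w y" by auto
        have g: "0 \<le> green_disk x y" "green_disk x y \<le> 1 / (pi * cmod (x - y))"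
          using green_bound[OF x True] elim by auto
        have "green_disk x y * w y \<le> 1 / (pi * cmod (x - y)) * w y"
          using g w by (intro mult_right_mono) auto
        thus ?thesis using True g w by (simp add: abs_mult)
      qed simp
    qed
  qed
qed

lemma green_le:
  assumes x: "x \<in> unit_disk"
  shows "green_op w x \<le> B / pi"
proof -
  have "green_op w x \<le> (LINT y:unit_disk|lebesgue. (1/pi) * (w y / cmod (x - y)))"
    unfolding green_op_def
  proof (rule set_integral_mono_AE[OF green_int[OF x]])
    show "set_integrable lebesgue unit_disk (\<lambda>y. 1 / pi * (w y / cmod (x - y)))"
      by (intro set_integrable_mult_right bath_int(1))
    show "AE y\<in>unit_disk in lebesgue. green_disk x y * w y \<le> 1 / pi * (w y / cmod (x - y))"
      using wb AE_neq_leb[of x]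
    proof eventually_elim
      case (elim y)
      show ?case
      proof
        assume True: "y \<in> unit_disk"
        with elim have w: "0 \<le> w y" by auto
        have g: "green_disk x y \<le> 1 / (pi * cmod (x - y))"
          using green_bound[OF x True] elim by auto
        have "green_disk x y * w y \<le> 1 / (pi * cmod (x - y)) * w y"
          using g w by (intro mult_right_mono) auto
        thus "green_disk x y * w y \<le> 1 / pi * (w y / cmod (x - y))" by simp
      qed
    qed
  qed
  also have "\<dots> = (1/pi) * (LINT y:unit_disk|lebesgue. w y / cmod (x - y))" by (rule set_integral_mult_right)
  also have "\<dots> \<le> (1/pi) * B" using bath_int(2)[of x] by (intro mult_left_mono) auto
  finally show ?thesis by simp
qed

lemma green_lipschitz:
  assumes x: "x \<in> unit_disk" and z: "z \<in> unit_disk"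
  shows "\<bar>green_op w x - green_op w z\<bar> \<le> cmod (x - z) * (2 * B / pi)"
proof -
  define h where "h y = green_disk x y * w y - green_disk z y * w y" for y
  define k where "k y = cmod (x - z) / pi * (w y / cmod (x - y) + w y / cmod (z - y))" for y
  have hi: "set_integrable lebesgue unit_disk h" unfolding h_def
    using green_int[OF x] green_int[OF z] by (rule set_integral_diff)
  have ki: "set_integrable lebesgue unit_disk k" unfolding k_def
    using bath_int(1)[of x] bath_int(1)[of z] by (intro set_integrable_mult_right set_integral_add)
  have eq: "green_op w x - green_op w z = (LINT y:unit_disk|lebesgue. h y)"
    unfolding green_op_def h_def using green_int[OF x] green_int[OF z] by (rule set_integral_diff(2)[symmetric])
  have kv: "(LINT y:unit_disk|lebesgue. k y) \<le> cmod (x - z) * (2 * B / pi)"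
  proof -
    have "(LINT y:unit_disk|lebesgue. k y) = cmod (x - z) / pi * ((LINT y:unit_disk|lebesgue. w y / cmod (x - y)) + (LINT y:unit_disk|lebesgue. w y / cmod (z - y)))"
      unfolding k_def using bath_int(1)[of x] bath_int(1)[of z] by (simp add: set_integral_add)
    also have "\<dots> \<le> cmod (x - z) / pi * (B + B)"
      using bath_int(2)[of x] bath_int(2)[of z] by (intro mult_left_mono add_mono) auto
    finally show ?thesis by (simp add: field_simps)
  qed
  have ae: "AE y\<in>unit_disk in lebesgue. \<bar>h y\<bar> \<le> k y"
    using wb AE_neq_leb[of x] AE_neq_leb[of z]
  proof eventually_elim
    case (elim y)
    show ?case
    proof
      assume y: "y \<in> unit_disk"
      with elim have w: "0 \<le> w y" by auto
      have "\<bar>h y\<bar> = \<bar>green_disk x y - green_disk z y\<bar> * w y"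
        unfolding h_def using w by (simp add: abs_mult left_diff_distrib[symmetric])
      also have "\<dots> \<le> cmod (x - z) / pi * (1 / cmod (x - y) + 1 / cmod (z - y)) * w y"
        using green_lip[OF x z y] elim w by (intro mult_right_mono) auto
      also have "\<dots> = k y" by (simp add: k_def field_simps)
      finally show "\<bar>h y\<bar> \<le> k y" .
    qed
  qed
  have hk: "(LINT y:unit_disk|lebesgue. h y) \<le> (LINT y:unit_disk|lebesgue. k y)"
    using hi ki by (rule set_integral_mono_AE) (use ae in \<open>auto elim: eventually_mono\<close>)
  have mki: "set_integrable lebesgue unit_disk (\<lambda>y. - k y)"
    using ki unfolding set_integrable_def by simp
  moreover have "(LINT y:unit_disk|lebesgue. - k y) \<le> (LINT y:unit_disk|lebesgue. h y)"
    using mki hi by (intro set_integral_mono_AE) (use ae in \<open>auto elim: eventually_mono\<close>)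
  moreover have "(LINT y:unit_disk|lebesgue. - k y) = - (LINT y:unit_disk|lebesgue. k y)"
    by (rule set_integral_uminus[OF ki])
  ultimately show ?thesis unfolding eq using kv hk by linarith
qed

end


lemma dir_deriv:
  fixes f :: "complex \<Rightarrow> real"
  assumes "(f has_derivative f') (at x)"
  shows "((\<lambda>t. f (x + t *\<^sub>R v)) has_real_derivative f' v) (at 0)"
proof -
  have l: "linear f'" using assms by (rule has_derivative_linear)
  have p: "((\<lambda>t::real. x + t *\<^sub>R v) has_derivative (\<lambda>t. t *\<^sub>R v)) (at 0)"
    by (auto intro!: derivative_eq_intros)
  have a: "(f has_derivative f') (at ((\<lambda>t::real. x + t *\<^sub>R v) 0))" using assms by simp
  have "((f \<circ> (\<lambda>t. x + t *\<^sub>R v)) has_derivative (f' \<circ> (\<lambda>t. t *\<^sub>R v))) (at 0)"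
    by (rule diff_chain_at[OF p a])
  hence h: "((\<lambda>t. f (x + t *\<^sub>R v)) has_derivative (\<lambda>t. f' (t *\<^sub>R v))) (at 0)"
    by (simp add: o_def)
  have eq: "(\<lambda>t. f' (t *\<^sub>R v)) = (*) (f' v)"
    by (rule ext) (simp add: linear_cmul[OF l] mult.commute)
  from h show ?thesis unfolding has_field_derivative_def eq .
qed

lemma deriv_lip_bound:
  fixes f :: "complex \<Rightarrow> real"
  assumes d: "(f has_derivative f') (at x)" and U: "open U" "x \<in> U"
    and lip: "\<And>z. z \<in> U \<Longrightarrow> \<bar>f z - f x\<bar> \<le> Lc * cmod (z - x)"
  shows "\<bar>f' v\<bar> \<le> Lc * cmod v"
proof -
  define g where "g t = f (x + t *\<^sub>R v)" for t :: real
  have gd: "(g has_real_derivative f' v) (at 0)" unfolding g_def by (rule dir_deriv[OF d])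
  hence lim: "((\<lambda>t. (g t - g 0) / (t - 0)) \<longlongrightarrow> f' v) (at 0)"
    using DERIV_def by (simp add: has_field_derivative_iff)
  have ev: "eventually (\<lambda>t. x + t *\<^sub>R v \<in> U) (at (0::real))"
  proof -
    have "isCont (\<lambda>t::real. x + t *\<^sub>R v) 0" by (intro continuous_intros)
    thus ?thesis using U unfolding isCont_def tendsto_def by simp
  qed
  have "eventually (\<lambda>t. norm ((g t - g 0) / (t - 0)) \<le> Lc * cmod v) (at (0::real))"
    using ev eventually_neq_at_within[of 0 0 UNIV]
  proof (eventually_elim)
    case (elim t)
    have "\<bar>g t - g 0\<bar> \<le> Lc * cmod (t *\<^sub>R v)" unfolding g_def using lip[OF elim(1)] by simp
    also have "\<dots> = \<bar>t\<bar> * (Lc * cmod v)" by (simp add: abs_mult)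
    finally have "\<bar>g t - g 0\<bar> \<le> \<bar>t\<bar> * (Lc * cmod v)" .
    thus ?case using elim(2)
      by (auto simp: abs_divide divide_le_eq mult.commute)
  qed
  hence "norm (f' v) \<le> Lc * cmod v"
    by (intro tendsto_upperbound[OF tendsto_norm[OF lim]]) auto
  thus ?thesis by simp
qed

lemma deriv_min_zero:
  fixes f :: "complex \<Rightarrow> real"
  assumes d: "(f has_derivative f') (at x)" and m: "\<And>z. f x \<le> f z"
  shows "f' v = 0"
proof -
  have gd: "((\<lambda>t. f (x + t *\<^sub>R v)) has_real_derivative f' v) (at 0)" by (rule dir_deriv[OF d])
  show ?thesis by (rule DERIV_local_min[OF gd, of 1]) (auto intro: m)
qed


context wsetup begin

lemma green_cont: "continuous_on unit_disk (green_op w)"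
proof (rule lipschitz_on_continuous_on)
  show "(2 * B / pi)-lipschitz_on unit_disk (green_op w)"
  proof (rule lipschitz_onI)
    fix x z assume "x \<in> unit_disk" "z \<in> unit_disk"
    thus "dist (green_op w x) (green_op w z) \<le> 2 * B / pi * dist x z"
      using green_lipschitz[of x z] by (simp add: dist_real_def dist_norm mult.commute)
  next
    show "0 \<le> 2 * B / pi" using B_nonneg by simp
  qed
qed

lemma S_sets[measurable]: "{x \<in> unit_disk. w x < lam} \<in> sets lebesgue"
  by measurable

lemma disk_measure: "measure lebesgue unit_disk = pi" "emeasure lebesgue unit_disk = ennreal pi"
proof -
  have e: "emeasure lebesgue (ball (0::complex) 1) = ennreal pi"
  proof -
    have "emeasure lebesgue (ball (0::complex) 1) = emeasure lborel (ball (0::complex) 1)"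
      by (simp add: emeasure_completion)
    also have "\<dots> = ennreal (unit_ball_vol (DIM(complex)) * 1 ^ DIM(complex))"
      using emeasure_ball[of 1 "0::complex"] by simp
    also have "unit_ball_vol (DIM(complex)) = pi"
      using unit_ball_vol_numeral(1)[of Num.One] by simp
    finally show ?thesis by simp
  qed
  thus "emeasure lebesgue unit_disk = ennreal pi" by (simp add: unit_disk_def)
  thus "measure lebesgue unit_disk = pi" by (simp add: measure_def)
qed

lemma S_not_null: "emeasure lebesgue {x \<in> unit_disk. w x < lam} \<noteq> 0"
proof
  assume n: "emeasure lebesgue {x \<in> unit_disk. w x < lam} = 0"
  have "{x \<in> unit_disk. w x < lam} \<in> null_sets lebesgue"
    using n S_sets by (simp add: null_sets_def)
  hence "AE y in lebesgue. y \<notin> {x \<in> unit_disk. w x < lam}"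
    by (rule AE_not_in)
  hence ae: "AE y\<in>unit_disk in lebesgue. lam \<le> w y"
    by (auto elim: eventually_mono)
  have ci: "set_integrable lebesgue unit_disk (\<lambda>_. lam)"
    using disk_measure(2) unfolding set_integrable_def
    by (intro integrable_scaleR_left integrable_real_indicator) auto
  have "(LINT y:unit_disk|lebesgue. lam) \<le> (LINT y:unit_disk|lebesgue. w y)"
    by (rule set_integral_mono_AE[OF ci wi ae])
  also have "\<dots> = 1" by (rule w1)
  also have "(LINT y:unit_disk|lebesgue. lam) = pi * lam"
    using disk_measure by (subst set_integral_const) (auto simp: disk_sets)
  finally have "pi * lam \<le> 1" .
  moreover have "pi * lam \<ge> pi * 1" using lam by (intro mult_left_mono) auto
  hence "pi * lam > 1" using pi_gt3 by linarith
  ultimately show False by simp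
qed

lemma psi_le:
  "AE x in lebesgue. x \<in> unit_disk \<and> w x < lam \<longrightarrow> psi Om lam w x \<le> 0"
proof -
  define S where "S = {x \<in> unit_disk. w x < lam}"
  define f where "f x = ereal (green_op w x + Om/2 * (cmod x)^2)" for x
  let ?M = "restrict_space lebesgue S"
  have Ss[measurable]: "S \<in> sets lebesgue" unfolding S_def by measurable
  have SD: "S \<subseteq> unit_disk" unfolding S_def by auto
  have cont: "continuous_on S (\<lambda>x. green_op w x + Om/2 * (cmod x)^2)"
    by (intro continuous_intros continuous_on_subset[OF green_cont SD])
  have fm: "f \<in> borel_measurable ?M"
    unfolding f_def using continuous_imp_measurable_on_sets_lebesgue[OF cont Ss] by measurable
  have up: "esssup ?M f \<le> ereal (B/pi + \<bar>Om\<bar>/2)"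
  proof (rule esssup_I[OF fm])
    show "AE x in ?M. f x \<le> ereal (B / pi + \<bar>Om\<bar> / 2)"
    proof (rule AE_I2)
      fix x assume "x \<in> space ?M"
      hence x: "x \<in> unit_disk" using SD by auto
      have "cmod x ^ 2 \<le> 1" using x by (simp add: unit_disk_def power_le_one)
      have "Om/2 * (cmod x)^2 \<le> \<bar>Om\<bar>/2 * (cmod x)^2" by (intro mult_right_mono) auto
      also have "\<dots> \<le> \<bar>Om\<bar>/2 * 1" using \<open>cmod x ^ 2 \<le> 1\<close> by (intro mult_left_mono) auto
      finally have "Om/2 * (cmod x)^2 \<le> \<bar>Om\<bar>/2" by simp
      thus "f x \<le> ereal (B / pi + \<bar>Om\<bar> / 2)" using green_le[OF x] unfolding f_def by simp
    qed
  qed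
  have nm: "esssup ?M f \<noteq> - \<infinity>"
  proof
    assume e: "esssup ?M f = - \<infinity>"
    have "AE x in ?M. f x \<le> esssup ?M f" by (rule esssup_AE)
    hence "AE x in ?M. False" unfolding e f_def by simp
    hence "emeasure ?M (space ?M) = 0"
      using ae_filter_eq_bot_iff trivial_limit_def by metis
    hence "emeasure lebesgue S = 0"
      by (subst (asm) emeasure_restrict_space) auto
    thus False using S_not_null unfolding S_def by simp
  qed
  have pm: "esssup ?M f \<noteq> \<infinity>" using up by auto
  have mu: "esssup ?M f = ereal (mu_val Om lam w)"
    unfolding mu_val_def S_def[symmetric] f_def[symmetric] using nm pm
    by (cases "esssup ?M f") auto
  have "AE x in ?M. f x \<le> esssup ?M f" by (rule esssup_AE)
  hence "AE x in lebesgue. x \<in> S \<longrightarrow> f x \<le> esssup ?M f"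
    by (subst (asm) AE_restrict_space_iff) auto
  hence "AE x in lebesgue. x \<in> S \<longrightarrow> f x \<le> ereal (mu_val Om lam w)"
    unfolding mu .
  thus ?thesis
    by (rule eventually_mono) (auto simp: S_def f_def psi_def)
qed

end


context wsetup begin

definition "Lc Om = 2 * B / pi + \<bar>Om\<bar>"

lemma Lc_nonneg: "Lc Om \<ge> 0" unfolding Lc_def using B_nonneg by simp

lemma psi_lip:
  assumes x: "x \<in> unit_disk" and z: "z \<in> unit_disk"
  shows "\<bar>psi Om lam w z - psi Om lam w x\<bar> \<le> Lc Om * cmod (z - x)"
proof -
  have nx: "cmod x < 1" and nz: "cmod z < 1" using x z by (auto simp: unit_disk_def)
  have e: "(cmod z)^2 - (cmod x)^2 = (cmod z - cmod x) * (cmod z + cmod x)"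
    by (simp add: power2_eq_square algebra_simps)
  have "\<bar>(cmod z)^2 - (cmod x)^2\<bar> = \<bar>cmod z - cmod x\<bar> * (cmod z + cmod x)"
    unfolding e by (simp add: abs_mult)
  also have "\<dots> \<le> cmod (z - x) * 2"
    using nx nz norm_triangle_ineq3[of z x] by (intro mult_mono) auto
  finally have q: "\<bar>(cmod z)^2 - (cmod x)^2\<bar> \<le> cmod (z - x) * 2" .
  have "psi Om lam w z - psi Om lam w x = (green_op w z - green_op w x) + Om/2 * ((cmod z)^2 - (cmod x)^2)"
    unfolding psi_def by (simp add: algebra_simps)
  hence "\<bar>psi Om lam w z - psi Om lam w x\<bar> \<le> \<bar>green_op w z - green_op w x\<bar> + \<bar>Om/2 * ((cmod z)^2 - (cmod x)^2)\<bar>"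
    by (simp only: abs_triangle_ineq)
  moreover have "\<bar>Om/2 * ((cmod z)^2 - (cmod x)^2)\<bar> = \<bar>Om\<bar>/2 * \<bar>(cmod z)^2 - (cmod x)^2\<bar>"
    by (simp add: abs_mult)
  ultimately have "\<bar>psi Om lam w z - psi Om lam w x\<bar> \<le> \<bar>green_op w z - green_op w x\<bar> + \<bar>Om\<bar>/2 * \<bar>(cmod z)^2 - (cmod x)^2\<bar>"
    by linarith
  also have "\<dots> \<le> cmod (z - x) * (2 * B / pi) + \<bar>Om\<bar>/2 * (cmod (z - x) * 2)"
    using green_lipschitz[OF z x] q by (intro add_mono mult_left_mono) auto
  also have "\<dots> = Lc Om * cmod (z - x)" unfolding Lc_def by (simp add: algebra_simps)
  finally show ?thesis .
qed

lemma grad_bound: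
  assumes x: "x \<in> unit_disk"
  shows "grad_sq (\<lambda>y. max (psi Om lam w y) 0) x \<le> 2 * (Lc Om)^2"
    and "psi Om lam w x \<le> 0 \<Longrightarrow> grad_sq (\<lambda>y. max (psi Om lam w y) 0) x = 0"
proof -
  define F where "F y = max (psi Om lam w y) 0" for y
  define f' where "f' = frechet_derivative F (at x)"
  have lipF: "\<bar>F z - F x\<bar> \<le> Lc Om * cmod (z - x)" if "z \<in> unit_disk" for z
  proof -
    have "\<bar>F z - F x\<bar> \<le> \<bar>psi Om lam w z - psi Om lam w x\<bar>" unfolding F_def by linarith
    also have "\<dots> \<le> Lc Om * cmod (z - x)" by (rule psi_lip[OF x that])
    finally show ?thesis .
  qed
  have op: "open unit_disk" by (simp add: unit_disk_def)
  show "grad_sq (\<lambda>y. max (psi Om lam w y) 0) x \<le> 2 * (Lc Om)^2"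
  proof (cases "F differentiable (at x)")
    case True
    hence d: "(F has_derivative f') (at x)" unfolding f'_def by (simp add: frechet_derivative_works)
    have b1: "\<bar>f' 1\<bar> \<le> Lc Om" using deriv_lip_bound[OF d op x lipF, of 1] by simp
    have b2: "\<bar>f' \<i>\<bar> \<le> Lc Om" using deriv_lip_bound[OF d op x lipF, of \<i>] by simp
    have "\<bar>f' 1\<bar>^2 \<le> (Lc Om)^2" by (rule power_mono[OF b1]) simp
    moreover have "\<bar>f' \<i>\<bar>^2 \<le> (Lc Om)^2" by (rule power_mono[OF b2]) simp
    ultimately show ?thesis using True unfolding grad_sq_def F_def[symmetric] f'_def[symmetric] by simp
  next
    case False
    thus ?thesis unfolding grad_sq_def F_def[symmetric] by simp
  qed
  assume p: "psi Om lam w x \<le> 0"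
  show "grad_sq (\<lambda>y. max (psi Om lam w y) 0) x = 0"
  proof (cases "F differentiable (at x)")
    case True
    hence d: "(F has_derivative f') (at x)" unfolding f'_def by (simp add: frechet_derivative_works)
    have m: "F x \<le> F z" for z using p unfolding F_def by simp
    show ?thesis using True deriv_min_zero[OF d m, of 1] deriv_min_zero[OF d m, of \<i>]
      unfolding grad_sq_def F_def[symmetric] f'_def[symmetric] by simp
  next
    case False
    thus ?thesis unfolding grad_sq_def F_def[symmetric] by simp
  qed
qed

lemma kinetic_bound: "kinetic Om lam w \<le> (Lc Om)^2 / lam"
proof -
  define A where "A = {x \<in> unit_disk. lam \<le> w x}"
  define g where "g x = grad_sq (\<lambda>y. max (psi Om lam w y) 0) x" for x
  define c where "c = 2 * (Lc Om)^2"
  have c0: "c \<ge> 0" unfolding c_def by simp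
  have As[measurable]: "A \<in> sets lebesgue" unfolding A_def by measurable
  have AD: "A \<subseteq> unit_disk" unfolding A_def by auto
  have "emeasure lebesgue A \<le> ennreal pi"
    using emeasure_mono[OF AD disk_sets] unfolding disk_measure(2) .
  hence Afin: "emeasure lebesgue A < \<infinity>" by (metis ennreal_less_top infinity_ennreal_def le_less_trans)
  have ind: "(\<lambda>y. indicator unit_disk y *\<^sub>R (d * indicator A y)) = (\<lambda>y. d * indicator A y)" for d :: real
    using AD by (auto simp: indicator_def fun_eq_iff)
  have Ai: "set_integrable lebesgue unit_disk (\<lambda>y. d * indicator A y)" for d :: real
    unfolding set_integrable_def ind using Afin by (intro integrable_mult_right integrable_real_indicator) auto
  have Av: "(LINT y:unit_disk|lebesgue. d * indicator A y) = d * measure lebesgue A" for d :: real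
    unfolding set_lebesgue_integral_def ind using Afin by simp
  have mA: "measure lebesgue A \<le> 1 / lam"
  proof -
    have "(LINT y:unit_disk|lebesgue. lam * indicator A y) \<le> (LINT y:unit_disk|lebesgue. w y)"
    proof (rule set_integral_mono_AE[OF Ai wi])
      show "AE y\<in>unit_disk in lebesgue. lam * indicator A y \<le> w y"
        using wb by eventually_elim (auto simp: A_def indicator_def)
    qed
    hence "lam * measure lebesgue A \<le> 1" unfolding Av w1 .
    thus ?thesis using lam by (simp add: field_simps)
  qed
  have gi: "(LINT x:unit_disk|lebesgue. g x) \<le> c / lam"
  proof (cases "set_integrable lebesgue unit_disk g")
    case True
    have "(LINT x:unit_disk|lebesgue. g x) \<le> (LINT x:unit_disk|lebesgue. c * indicator A x)"
    proof (rule set_integral_mono_AE[OF True Ai])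
      show "AE x\<in>unit_disk in lebesgue. g x \<le> c * indicator A x"
        using psi_le[of Om]
      proof eventually_elim
        case (elim x)
        show ?case
        proof
          assume x: "x \<in> unit_disk"
          show "g x \<le> c * indicator A x"
          proof (cases "w x < lam")
            case True
            hence "g x = 0" unfolding g_def using grad_bound(2)[OF x] elim x by auto
            thus ?thesis using c0 by simp
          next
            case False
            hence "x \<in> A" using x by (auto simp: A_def)
            thus ?thesis unfolding g_def c_def using grad_bound(1)[OF x] by simp
          qed
        qed
      qed
    qed
    also have "\<dots> = c * measure lebesgue A" by (rule Av)
    also have "\<dots> \<le> c * (1 / lam)" using mA c0 by (intro mult_left_mono) auto
    finally show ?thesis by simp
  next
    case False
    hence "(LINT x:unit_disk|lebesgue. g x) = 0"
      unfolding set_lebesgue_integral_def set_integrable_def by (rule not_integrable_integral_eq)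
    thus ?thesis using c0 lam by simp
  qed
  have "kinetic Om lam w = 1/2 * (LINT x:unit_disk|lebesgue. g x)"
    unfolding kinetic_def g_def ..
  also have "\<dots> \<le> 1/2 * (c / lam)" using gi by simp
  finally show ?thesis unfolding c_def by simp
qed

end

theorem lemma2p7:
  fixes Om :: real and W :: "real \<Rightarrow> complex \<Rightarrow> real"
  assumes "Om > 0"
    and "\<And>lam. lam > 1 / pi \<Longrightarrow> is_maximizer Om lam (W lam)"
  shows "\<exists>C. \<exists>L. \<forall>lam \<ge> L. kinetic Om lam (W lam) \<le> C"
proof (intro exI allI impI)
  define c where "c = 2 * (1 + 4*pi) / pi"
  fix lam :: real assume lam: "lam \<ge> 1"
  have "1 / pi < 1" using pi_gt3 by simp
  hence "lam > 1 / pi" using lam by linarith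
  hence K: "W lam \<in> K_set lam" using assms(2) unfolding is_maximizer_def by blast
  have i1: "(LINT y:unit_disk|lebesgue. W lam y) = 1" using K by (simp add: K_set_def)
  have si: "set_integrable lebesgue unit_disk (W lam)"
  proof (rule ccontr)
    assume "\<not> set_integrable lebesgue unit_disk (W lam)"
    hence "(LINT y:unit_disk|lebesgue. W lam y) = 0"
      unfolding set_lebesgue_integral_def set_integrable_def by (rule not_integrable_integral_eq)
    thus False using i1 by simp
  qed
  interpret ws: wsetup "W lam" lam
    using K si i1 lam by unfold_locales (auto simp: K_set_def)
  have "kinetic Om lam (W lam) \<le> (ws.Lc Om)^2 / lam" by (rule ws.kinetic_bound)
  also have "ws.Lc Om = c * sqrt lam + \<bar>Om\<bar>"
    unfolding ws.Lc_def ws.B_def c_def by simp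
  also have "(c * sqrt lam + \<bar>Om\<bar>)^2 / lam \<le> (2 * c^2 * lam + 2 * Om^2) / lam"
  proof (rule divide_right_mono)
    have "(c * sqrt lam + \<bar>Om\<bar>)^2 = 2 * (c * sqrt lam)^2 + 2 * \<bar>Om\<bar>^2 - (c * sqrt lam - \<bar>Om\<bar>)^2"
      by (simp add: power2_eq_square algebra_simps)
    moreover have "0 \<le> (c * sqrt lam - \<bar>Om\<bar>)^2" by simp
    ultimately have "(c * sqrt lam + \<bar>Om\<bar>)^2 \<le> 2 * (c * sqrt lam)^2 + 2 * \<bar>Om\<bar>^2" by linarith
    thus "(c * sqrt lam + \<bar>Om\<bar>)^2 \<le> 2 * c^2 * lam + 2 * Om^2"
      using lam by (simp add: power_mult_distrib)
  qed (use lam in auto)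
  also have "\<dots> = 2 * c^2 + 2 * Om^2 / lam" using lam by (simp add: field_simps)
  also have "\<dots> \<le> 2 * c^2 + 2 * Om^2"
    using lam by (simp add: divide_le_eq_1_pos mult_le_cancel_left1 divide_le_eq)
  finally show "kinetic Om lam (W lam) \<le> 2 * (2 * (1 + 4*pi) / pi)^2 + 2 * Om^2"
    unfolding c_def .
qed


end
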